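(* Each of the following five functions fails to be matrix-convex, in the following sense: there exist $n\ge 1$, a vector $\mathbf{s}\in\mathbb{R}^n$, two matrices $\mathbf{X}_1,\mathbf{X}_2$ in the indicated domain, and $\lambda\in[0,1]$ such that $$f(\mathbf{s},\lambda\mathbf{X}_1+(1-\lambda)\mathbf{X}_2) > \lambda f(\mathbf{s},\mathbf{X}_1)+(1-\lambda) f(\mathbf{s},\mathbf{X}_2).$$ (i) Directed functions, with domain the set of $n\times n$ entrywise nonnegative row-stochastic matrices $\mathbf{X}$ (i.e. $\mathbf{X}\mathbf{1}=\mathbf{1}$), where $\mathbf{D}^{\mathrm{in}}(\mathbf{X})=\mathrm{diag}(\mathbf{X}^\top\mathbf{1})$: - P-Dir: $f(\mathbf{s},\mathbf{X})=\mathbf{s}^\top(2\mathbf{I}-\mathbf{X})^{-\top}(2\mathbf{I}-\mathbf{X})^{-1}\mathbf{s}$; - D-Dir: $f(\mathbf{s},\mathbf{X})=\tfrac12\mathbf{s}^\top(2\mathbf{I}-\mathbf{X})^{-\top}(\mathbf{I}+\mathbf{D}^{\mathrm{in}}(\mathbf{X})-2\mathbf{X})(2\mathbf{I}-\mathbf{X})^{-1}\mathbf{s}$; - PD-Dir: $f(\mathbf{s},\mathbf{X})=\tfrac12\mathbf{s}^\top(2\mathbf{I}-\mathbf{X})^{-\top}(\mathbf{I}-\mathbf{D}^{\mathrm{in}}(\mathbf{X}))(2\mathbf{I}-\mathbf{X})^{-1}\mathbf{s}$. (ii) Undirected functions, with domain the set of $n\times n$ Laplacian matrices $\mathbf{L}$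 of undirected graphs with nonnegative edge weights: - P-Undir: $f(\mathbf{s},\mathbf{L})=\mathbf{s}^\top(\mathbf{I}+\mathbf{L})^{-2}\mathbf{s}$; - D-Undir: $f(\mathbf{s},\mathbf{L})=\mathbf{s}^\top(\mathbf{I}+\mathbf{L})^{-1}\mathbf{L}(\mathbf{I}+\mathbf{L})^{-1}\mathbf{s}$.
   Context: $\mathbf{1}$ is the all-ones vector and $\mathbf{I}$ the identity matrix. A Laplacian of an undirected weighted graph with weight matrix $\mathbf{W}$ (symmetric, nonnegative, zero diagonal) is $\mathbf{L}=\mathrm{diag}(\mathbf{W}\mathbf{1})-\mathbf{W}$. For a row-stochastic nonnegative $\mathbf{X}$, the matrix $2\mathbf{I}-\mathbf{X}$ is invertible, and $\mathbf{I}+\mathbf{L}$ is invertible for any such Laplacian. A function $f(\mathbf{s},\cdot)$ is called matrix-convex if $f(\mathbf{s},\lambda\mathbf{X}_1+(1-\lambda)\mathbf{X}_2)\le\lambda f(\mathbf{s},\mathbf{X}_1)+(1-\lambda)f(\mathbf{s},\mathbf{X}_2)$ for all $\lambda\in[0,1]$ and all matrices $\mathbf{X}_1,\mathbf{X}_2$ in the domain. *)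

theory Defs
  imports "Jordan_Normal_Form.Matrix"
begin

definition ones_vec :: "nat \<Rightarrow> real vec" where
  "ones_vec n = vec n (\<lambda>_. 1)"

definition minv :: "nat \<Rightarrow> real mat \<Rightarrow> real mat" where
  "minv n A = (SOME B. B \<in> carrier_mat n n \<and> A * B = 1\<^sub>m n \<and> B * A = 1\<^sub>m n)"

definition qform :: "real vec \<Rightarrow> real mat \<Rightarrow> real" where
  "qform s M = s \<bullet> (M *\<^sub>v s)"

definition row_stochastic :: "nat \<Rightarrow> real mat \<Rightarrow> bool" where
  "row_stochastic n X \<longleftrightarrow> X \<in> carrier_mat n n \<and>
     (\<forall>i<n. \<forall>j<n. X $$ (i,j) \<ge> 0) \<and> X *\<^sub>v ones_vec n = ones_vec n"

definition laplacian :: "nat \<Rightarrow> real mat \<Rightarrow> bool" where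
  "laplacian n L \<longleftrightarrow> (\<exists>W \<in> carrier_mat n n.
     (\<forall>i<n. \<forall>j<n. W $$ (i,j) = W $$ (j,i) \<and> W $$ (i,j) \<ge> 0) \<and>
     (\<forall>i<n. W $$ (i,i) = 0) \<and>
     L = mat_diag n (\<lambda>i. (W *\<^sub>v ones_vec n) $ i) - W)"

definition D_in :: "nat \<Rightarrow> real mat \<Rightarrow> real mat" where
  "D_in n X = mat_diag n (\<lambda>i. (transpose_mat X *\<^sub>v ones_vec n) $ i)"

definition P_Dir :: "nat \<Rightarrow> real vec \<Rightarrow> real mat \<Rightarrow> real" where
  "P_Dir n s X = (let M = minv n (2 \<cdot>\<^sub>m 1\<^sub>m n - X) in
     qform s (transpose_mat M * M))"

definition D_Dir :: "nat \<Rightarrow> real vec \<Rightarrow> real mat \<Rightarrow> real" where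
  "D_Dir n s X = (let M = minv n (2 \<cdot>\<^sub>m 1\<^sub>m n - X) in
     (1/2) * qform s (transpose_mat M * (1\<^sub>m n + D_in n X - 2 \<cdot>\<^sub>m X) * M))"

definition PD_Dir :: "nat \<Rightarrow> real vec \<Rightarrow> real mat \<Rightarrow> real" where
  "PD_Dir n s X = (let M = minv n (2 \<cdot>\<^sub>m 1\<^sub>m n - X) in
     (1/2) * qform s (transpose_mat M * (1\<^sub>m n - D_in n X) * M))"

definition P_Undir :: "nat \<Rightarrow> real vec \<Rightarrow> real mat \<Rightarrow> real" where
  "P_Undir n s L = (let N = minv n (1\<^sub>m n + L) in qform s (N * N))"

definition D_Undir :: "nat \<Rightarrow> real vec \<Rightarrow> real mat \<Rightarrow> real" where
  "D_Undir n s L = (let N = minv n (1\<^sub>m n + L) in qform s (N * L * N))"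

definition not_matrix_convex ::
  "(nat \<Rightarrow> real mat \<Rightarrow> bool) \<Rightarrow> (nat \<Rightarrow> real vec \<Rightarrow> real mat \<Rightarrow> real) \<Rightarrow> bool" where
  "not_matrix_convex D f \<longleftrightarrow> (\<exists>n\<ge>1. \<exists>s \<in> carrier_vec n. \<exists>X1 X2 l.
     D n X1 \<and> D n X2 \<and> 0 \<le> l \<and> l \<le> 1 \<and>
     f n s (l \<cdot>\<^sub>m X1 + (1 - l) \<cdot>\<^sub>m X2) > l * f n s X1 + (1 - l) * f n s X2)"

end

theory Submission
  imports Defs
begin

lemma minv_eq:
  assumes A: "A \<in> carrier_mat n n" and B: "B \<in> carrier_mat n n"
    and AB: "A * B = 1\<^sub>m n" and BA: "B * A = 1\<^sub>m n"
  shows "minv n A = B"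
proof -
  have ex: "\<exists>B. B \<in> carrier_mat n n \<and> A * B = 1\<^sub>m n \<and> B * A = 1\<^sub>m n" using B AB BA by blast
  define C where "C = minv n A"
  have C: "C \<in> carrier_mat n n" "A * C = 1\<^sub>m n" "C * A = 1\<^sub>m n"
    using someI_ex[OF ex] unfolding C_def minv_def by auto
  have "C = C * (A * B)" using C(1) AB by (simp add: right_mult_one_mat)
  also have "C * (A * B) = (C * A) * B" using A B C(1) by (simp add: assoc_mult_mat)
  also have "(C * A) * B = B" using C(3) B by (simp add: left_mult_one_mat)
  finally show ?thesis unfolding C_def .
qed

lemma less2: "(i::nat) < 2 \<longleftrightarrow> i = 0 \<or> i = 1" by auto
lemma less3: "(i::nat) < 3 \<longleftrightarrow> i = 0 \<or> i = 1 \<or> i = 2" by auto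
lemma all2: "(\<forall>i<(2::nat). P i) \<longleftrightarrow> P 0 \<and> P 1" by (auto simp: less2)
lemma all3: "(\<forall>i<(3::nat). P i) \<longleftrightarrow> P 0 \<and> P 1 \<and> P 2" by (auto simp: less3)
lemma sum2: "(\<Sum>i\<in>{0..<2::nat}. f i) = f 0 + f 1" by (simp add: numeral_2_eq_2)
lemma sum3: "(\<Sum>i\<in>{0..<3::nat}. f i) = f 0 + f 1 + f 2" by (simp add: numeral_3_eq_3 numeral_2_eq_2)

definition M2 :: "real \<Rightarrow> real \<Rightarrow> real \<Rightarrow> real \<Rightarrow> real mat" where
  "M2 a b c d = mat 2 2 (\<lambda>(i,j). [[a,b],[c,d]] ! i ! j)"
definition V2 :: "real \<Rightarrow> real \<Rightarrow> real vec" where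
  "V2 x y = vec 2 (\<lambda>i. [x,y] ! i)"

lemma M2_carrier[simp]: "M2 a b c d \<in> carrier_mat 2 2" by (simp add: M2_def)
lemma M2_dims[simp]: "dim_row (M2 a b c d) = 2" "dim_col (M2 a b c d) = 2" by (simp_all add: M2_def)
lemma M2_idx[simp]: "M2 a b c d $$ (0,0) = a" "M2 a b c d $$ (0,1) = b" "M2 a b c d $$ (1,0) = c" "M2 a b c d $$ (1,1) = d"
  "M2 a b c d $$ (0,Suc 0) = b" "M2 a b c d $$ (Suc 0,0) = c" "M2 a b c d $$ (Suc 0,Suc 0) = d"
  by (simp_all add: M2_def)
lemma V2_carrier[simp]: "V2 x y \<in> carrier_vec 2" "dim_vec (V2 x y) = 2" by (simp_all add: V2_def)
lemma V2_idx[simp]: "V2 x y $ 0 = x" "V2 x y $ 1 = y" "V2 x y $ Suc 0 = y" by (simp_all add: V2_def)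

lemma M2_eqI: assumes "A \<in> carrier_mat 2 2" "A $$ (0,0) = a" "A $$ (0,1) = b" "A $$ (1,0) = c" "A $$ (1,1) = d"
  shows "A = M2 a b c d"
  using assms by (intro eq_matI) (auto simp: less2)
lemma V2_eqI: assumes "v \<in> carrier_vec 2" "v $ 0 = a" "v $ 1 = b" shows "v = V2 a b"
proof (rule eq_vecI)
  show "dim_vec v = dim_vec (V2 a b)" using assms(1) by simp
  fix i assume "i < dim_vec (V2 a b)"
  then have "i = 0 \<or> i = 1" by auto
  then show "v $ i = V2 a b $ i"
  proof
    assume "i = 0" then show ?thesis using assms(2) by (simp only: V2_idx)
  next
    assume "i = 1" then show ?thesis using assms(3) by (simp only: V2_idx)
  qed
qed

lemma M2_eq_iff[simp]: "M2 a b c d = M2 e f g h \<longleftrightarrow> a=e \<and> b=f \<and> c=g \<and> d=h"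
proof
  assume h: "M2 a b c d = M2 e f g h"
  show "a=e \<and> b=f \<and> c=g \<and> d=h" using M2_idx(1-4)[of a b c d] unfolding h by simp
qed simp
lemma M2_mult[simp]: "M2 a b c d * M2 e f g h = M2 (a*e+b*g) (a*f+b*h) (c*e+d*g) (c*f+d*h)"
  by (rule M2_eqI) (auto simp: scalar_prod_def sum2)
lemma M2_add[simp]: "M2 a b c d + M2 e f g h = M2 (a+e) (b+f) (c+g) (d+h)"
  by (rule M2_eqI) auto
lemma M2_minus[simp]: "M2 a b c d - M2 e f g h = M2 (a-e) (b-f) (c-g) (d-h)"
  by (rule M2_eqI) auto
lemma M2_smult[simp]: "k \<cdot>\<^sub>m M2 a b c d = M2 (k*a) (k*b) (k*c) (k*d)"
  by (rule M2_eqI) auto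
lemma M2_transpose[simp]: "transpose_mat (M2 a b c d) = M2 a c b d"
  by (rule M2_eqI) auto
lemma M2_one: "1\<^sub>m 2 = M2 1 0 0 1"
  by (rule M2_eqI) auto
lemma M2_diag: "mat_diag 2 f = M2 (f 0) 0 0 (f 1)"
  by (rule M2_eqI) (auto simp: mat_diag_def)
lemma M2_mulv[simp]: "M2 a b c d *\<^sub>v V2 x y = V2 (a*x+b*y) (c*x+d*y)"
  apply (rule V2_eqI)
  apply (rule carrier_vecI, simp)
  apply (simp_all add: scalar_prod_def sum2)
  done
lemma V2_dot[simp]: "V2 a b \<bullet> V2 x y = a*x+b*y"
  by (simp add: scalar_prod_def sum2)
lemma ones2: "ones_vec 2 = V2 1 1" by (rule V2_eqI) (auto simp: ones_vec_def)
lemma inv2_aux: fixes a b c d D :: real assumes D: "D \<noteq> 0" and HD: "a*d - b*c = D"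
  shows "a*(d/D) + b*(-c/D) = 1" "a*(-b/D) + b*(a/D) = 0" "c*(d/D) + d*(-c/D) = 0" "c*(-b/D) + d*(a/D) = 1"
    "d/D*a + (-b/D)*c = 1" "d/D*b + (-b/D)*d = 0" "(-c/D)*a + a/D*c = 0" "(-c/D)*b + a/D*d = 1"
proof -
  have q: "x/D + y/D = (x+y)/D" for x y by (simp add: add_divide_distrib)
  have HD': "a*d + -(b*c) = D" "-(c*b) + a*d = D" using HD by (simp_all add: algebra_simps)
  show "a*(d/D) + b*(-c/D) = 1" "a*(-b/D) + b*(a/D) = 0" "c*(d/D) + d*(-c/D) = 0" "c*(-b/D) + d*(a/D) = 1"
    "d/D*a + (-b/D)*c = 1" "d/D*b + (-b/D)*d = 0" "(-c/D)*a + a/D*c = 0" "(-c/D)*b + a/D*d = 1"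
    using D HD' by (simp_all only: times_divide_eq_right times_divide_eq_left q mult_minus_right mult_minus_left, simp_all add: algebra_simps)
qed
lemma M2_inv: assumes "a*d-b*c \<noteq> 0"
  shows "minv 2 (M2 a b c d) = M2 (d/(a*d-b*c)) (-b/(a*d-b*c)) (-c/(a*d-b*c)) (a/(a*d-b*c))"
proof (rule minv_eq)
  note e1 = inv2_aux[OF assms refl]
  show "M2 a b c d * M2 (d/(a*d-b*c)) (-b/(a*d-b*c)) (-c/(a*d-b*c)) (a/(a*d-b*c)) = 1\<^sub>m 2"
    unfolding M2_one M2_mult M2_eq_iff by (intro conjI e1)
  show "M2 (d/(a*d-b*c)) (-b/(a*d-b*c)) (-c/(a*d-b*c)) (a/(a*d-b*c)) * M2 a b c d = 1\<^sub>m 2"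
    unfolding M2_one M2_mult M2_eq_iff by (intro conjI e1)
qed auto



definition M3 :: "real \<Rightarrow> real \<Rightarrow> real \<Rightarrow> real \<Rightarrow> real \<Rightarrow> real \<Rightarrow> real \<Rightarrow> real \<Rightarrow> real \<Rightarrow> real mat" where
  "M3 a b c d e f g h k = mat 3 3 (\<lambda>(i,j). [[a,b,c],[d,e,f],[g,h,k]] ! i ! j)"
definition V3 :: "real \<Rightarrow> real \<Rightarrow> real \<Rightarrow> real vec" where
  "V3 x y z = vec 3 (\<lambda>i. [x,y,z] ! i)"

lemma M3_carrier[simp]: "M3 a b c d e f g h k \<in> carrier_mat 3 3" by (simp add: M3_def)
lemma M3_dims[simp]: "dim_row (M3 a b c d e f g h k) = 3" "dim_col (M3 a b c d e f g h k) = 3" by (simp_all add: M3_def)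
lemma M3_idx[simp]:
  "M3 a b c d e f g h k $$ (0,0) = a" "M3 a b c d e f g h k $$ (0,1) = b" "M3 a b c d e f g h k $$ (0,2) = c"
  "M3 a b c d e f g h k $$ (1,0) = d" "M3 a b c d e f g h k $$ (1,1) = e" "M3 a b c d e f g h k $$ (1,2) = f"
  "M3 a b c d e f g h k $$ (2,0) = g" "M3 a b c d e f g h k $$ (2,1) = h" "M3 a b c d e f g h k $$ (2,2) = k"
  "M3 a b c d e f g h k $$ (0,Suc 0) = b" "M3 a b c d e f g h k $$ (Suc 0,0) = d" "M3 a b c d e f g h k $$ (Suc 0,Suc 0) = e"
  "M3 a b c d e f g h k $$ (Suc 0,2) = f" "M3 a b c d e f g h k $$ (2,Suc 0) = h"
  by (simp_all add: M3_def)
lemma V3_carrier[simp]: "V3 x y z \<in> carrier_vec 3" "dim_vec (V3 x y z) = 3" by (simp_all add: V3_def)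
lemma V3_idx[simp]: "V3 x y z $ 0 = x" "V3 x y z $ 1 = y" "V3 x y z $ 2 = z" "V3 x y z $ Suc 0 = y" by (simp_all add: V3_def)

lemma M3_eqI: assumes "A \<in> carrier_mat 3 3"
  "A $$ (0,0) = a" "A $$ (0,1) = b" "A $$ (0,2) = c"
  "A $$ (1,0) = d" "A $$ (1,1) = e" "A $$ (1,2) = f"
  "A $$ (2,0) = g" "A $$ (2,1) = h" "A $$ (2,2) = k"
  shows "A = M3 a b c d e f g h k"
proof (rule eq_matI)
  show "dim_row A = dim_row (M3 a b c d e f g h k)" "dim_col A = dim_col (M3 a b c d e f g h k)"
    using assms(1) by auto
  fix i j assume "i < dim_row (M3 a b c d e f g h k)" "j < dim_col (M3 a b c d e f g h k)"
  then have "i = 0 \<or> i = 1 \<or> i = 2" "j = 0 \<or> j = 1 \<or> j = 2" by (simp_all only: M3_dims less3)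
  then show "A $$ (i, j) = M3 a b c d e f g h k $$ (i, j)"
    by (elim disjE) (simp_all only: assms M3_idx)
qed

lemma V3_eqI: assumes "v \<in> carrier_vec 3" "v $ 0 = a" "v $ 1 = b" "v $ 2 = c" shows "v = V3 a b c"
proof (rule eq_vecI)
  show "dim_vec v = dim_vec (V3 a b c)" using assms(1) by simp
  fix i assume "i < dim_vec (V3 a b c)"
  then have "i = 0 \<or> i = 1 \<or> i = 2" by (simp only: V3_carrier less3)
  then show "v $ i = V3 a b c $ i"
    by (elim disjE) (simp_all only: assms V3_idx)
qed

lemma M3_mult[simp]: "M3 a b c d e f g h k * M3 a' b' c' d' e' f' g' h' k' =
  M3 (a*a'+b*d'+c*g') (a*b'+b*e'+c*h') (a*c'+b*f'+c*k')
     (d*a'+e*d'+f*g') (d*b'+e*e'+f*h') (d*c'+e*f'+f*k')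
     (g*a'+h*d'+k*g') (g*b'+h*e'+k*h') (g*c'+h*f'+k*k')"
  by (rule M3_eqI, rule carrier_matI) (simp_all add: scalar_prod_def sum3)
lemma M3_add[simp]: "M3 a b c d e f g h k + M3 a' b' c' d' e' f' g' h' k' =
  M3 (a+a') (b+b') (c+c') (d+d') (e+e') (f+f') (g+g') (h+h') (k+k')"
  by (rule M3_eqI, rule carrier_matI) simp_all
lemma M3_minus[simp]: "M3 a b c d e f g h k - M3 a' b' c' d' e' f' g' h' k' =
  M3 (a-a') (b-b') (c-c') (d-d') (e-e') (f-f') (g-g') (h-h') (k-k')"
  by (rule M3_eqI, rule carrier_matI) simp_all
lemma M3_smult[simp]: "r \<cdot>\<^sub>m M3 a b c d e f g h k = M3 (r*a) (r*b) (r*c) (r*d) (r*e) (r*f) (r*g) (r*h) (r*k)"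
  by (rule M3_eqI, rule carrier_matI) simp_all
lemma M3_one: "1\<^sub>m 3 = M3 1 0 0 0 1 0 0 0 1"
  by (rule M3_eqI, rule carrier_matI) simp_all
lemma M3_diag: "mat_diag 3 F = M3 (F 0) 0 0 0 (F 1) 0 0 0 (F 2)"
  by (rule M3_eqI, rule carrier_matI) (simp_all add: mat_diag_def)
lemma M3_mulv[simp]: "M3 a b c d e f g h k *\<^sub>v V3 x y z = V3 (a*x+b*y+c*z) (d*x+e*y+f*z) (g*x+h*y+k*z)"
  apply (rule V3_eqI)
  apply (rule carrier_vecI, simp)
  apply (simp_all add: scalar_prod_def sum3)
  done
lemma V3_dot[simp]: "V3 a b c \<bullet> V3 x y z = a*x+b*y+c*z"
  by (simp add: scalar_prod_def sum3)
lemma ones3: "ones_vec 3 = V3 1 1 1" by (rule V3_eqI) (simp_all add: ones_vec_def)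

lemma lap3: "laplacian 3 (M3 (a+b) (-a) (-b) (-a) (a+c) (-c) (-b) (-c) (b+c))"
  if "a \<ge> 0" "b \<ge> 0" "c \<ge> 0"
  unfolding laplacian_def
  by (rule bexI[of _ "M3 0 a b a 0 c b c 0"]) (use that in \<open>simp_all add: all3 M3_diag ones3\<close>)


lemma nmcI: "D n Xa \<Longrightarrow> D n Xb \<Longrightarrow> f n s (l \<cdot>\<^sub>m Xa + (1 - l) \<cdot>\<^sub>m Xb) > l * f n s Xa + (1 - l) * f n s Xb
  \<Longrightarrow> n \<ge> 1 \<Longrightarrow> s \<in> carrier_vec n \<Longrightarrow> 0 \<le> l \<Longrightarrow> l \<le> 1 \<Longrightarrow> not_matrix_convex D f"
  unfolding not_matrix_convex_def by blast

lemmas C2 = M2_one M2_inv ones2 all2 M2_diag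

lemma PDir: "not_matrix_convex row_stochastic P_Dir"
proof (rule nmcI[where n=2 and s="V2 2 1" and Xa="M2 1 0 0 1" and Xb="M2 1 0 1 0" and l="1/2"])
  show "row_stochastic 2 (M2 1 0 0 1)" "row_stochastic 2 (M2 1 0 1 0)"
    by (simp_all add: row_stochastic_def C2)
  show "P_Dir 2 (V2 2 1) (1 / 2 \<cdot>\<^sub>m M2 1 0 0 1 + (1 - 1 / 2) \<cdot>\<^sub>m M2 1 0 1 0) >
    1 / 2 * P_Dir 2 (V2 2 1) (M2 1 0 0 1) + (1 - 1 / 2) * P_Dir 2 (V2 2 1) (M2 1 0 1 0)"
    by (simp add: P_Dir_def Let_def qform_def C2)
qed auto

lemma DDir: "not_matrix_convex row_stochastic D_Dir"
proof (rule nmcI[where n=2 and s="V2 (-1) 2" and Xa="M2 1 0 0 1" and Xb="M2 0 1 1 0" and l="1/2"])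
  show "row_stochastic 2 (M2 1 0 0 1)" "row_stochastic 2 (M2 0 1 1 0)"
    by (simp_all add: row_stochastic_def C2)
  show "D_Dir 2 (V2 (-1) 2) (1 / 2 \<cdot>\<^sub>m M2 1 0 0 1 + (1 - 1 / 2) \<cdot>\<^sub>m M2 0 1 1 0) >
    1 / 2 * D_Dir 2 (V2 (-1) 2) (M2 1 0 0 1) + (1 - 1 / 2) * D_Dir 2 (V2 (-1) 2) (M2 0 1 1 0)"
    by (simp add: D_Dir_def D_in_def Let_def qform_def C2)
qed auto

lemma PDDir: "not_matrix_convex row_stochastic PD_Dir"
proof (rule nmcI[where n=2 and s="V2 (-1) 2" and Xa="M2 1 0 1 0" and Xb="M2 0 1 0 1" and l="1/2"])
  show "row_stochastic 2 (M2 1 0 1 0)" "row_stochastic 2 (M2 0 1 0 1)"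
    by (simp_all add: row_stochastic_def C2)
  show "PD_Dir 2 (V2 (-1) 2) (1 / 2 \<cdot>\<^sub>m M2 1 0 1 0 + (1 - 1 / 2) \<cdot>\<^sub>m M2 0 1 0 1) >
    1 / 2 * PD_Dir 2 (V2 (-1) 2) (M2 1 0 1 0) + (1 - 1 / 2) * PD_Dir 2 (V2 (-1) 2) (M2 0 1 0 1)"
    by (simp add: PD_Dir_def D_in_def Let_def qform_def C2)
qed auto

lemma lap2: "laplacian 2 (M2 w (-w) (-w) w)" if "w \<ge> 0"
  unfolding laplacian_def
  by (rule bexI[of _ "M2 0 w w 0"]) (use that in \<open>simp_all add: C2\<close>)

lemma DUndir: "not_matrix_convex laplacian D_Undir"
proof (rule nmcI[where n=2 and s="V2 1 (-1)" and Xa="M2 0 0 0 0" and Xb="M2 1 (-1) (-1) 1" and l="1/2"])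
  show "laplacian 2 (M2 0 0 0 0)" "laplacian 2 (M2 1 (-1) (-1) 1)"
    using lap2[of 0] lap2[of 1] by simp_all
  show "D_Undir 2 (V2 1 (-1)) (1 / 2 \<cdot>\<^sub>m M2 0 0 0 0 + (1 - 1 / 2) \<cdot>\<^sub>m M2 1 (-1) (-1) 1) >
    1 / 2 * D_Undir 2 (V2 1 (-1)) (M2 0 0 0 0) + (1 - 1 / 2) * D_Undir 2 (V2 1 (-1)) (M2 1 (-1) (-1) 1)"
    by (simp add: D_Undir_def Let_def qform_def C2)
qed auto

lemma invA: "minv 3 (1\<^sub>m 3 + M3 1 0 (-1) 0 1 (-1) (-1) (-1) 2) = M3 (5/8) (1/8) (1/4) (1/8) (5/8) (1/4) (1/4) (1/4) (1/2)"
  by (rule minv_eq) (simp_all add: M3_one)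
lemma invB: "minv 3 (1\<^sub>m 3 + M3 1 0 (-1) 0 2 (-2) (-1) (-2) 3) = M3 (8/13) (2/13) (3/13) (2/13) (7/13) (4/13) (3/13) (4/13) (6/13)"
  by (rule minv_eq) (simp_all add: M3_one)
lemma invC: "minv 3 (1\<^sub>m 3 + M3 1 0 (-1) 0 (3/2) (-3/2) (-1) (-3/2) (5/2)) = M3 (13/21) (1/7) (5/21) (1/7) (4/7) (2/7) (5/21) (2/7) (10/21)"
  by (rule minv_eq) (simp_all add: M3_one)

lemma PUndir: "not_matrix_convex laplacian P_Undir"
proof (rule nmcI[where n=3 and s="V3 (-1) 0 1" and Xa="M3 1 0 (-1) 0 1 (-1) (-1) (-1) 2"
      and Xb="M3 1 0 (-1) 0 2 (-2) (-1) (-2) 3" and l="1/2"])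
  show "laplacian 3 (M3 1 0 (-1) 0 1 (-1) (-1) (-1) 2)" using lap3[of 0 1 1] by simp
  show "laplacian 3 (M3 1 0 (-1) 0 2 (-2) (-1) (-2) 3)" using lap3[of 0 1 2] by simp
  have mid: "1/2 \<cdot>\<^sub>m M3 1 0 (-1) 0 1 (-1) (-1) (-1) 2 + (1 - 1/2) \<cdot>\<^sub>m M3 1 0 (-1) 0 2 (-2) (-1) (-2) 3
     = M3 1 0 (-1) 0 (3/2) (-3/2) (-1) (-3/2) (5/2)" by simp
  have a: "P_Undir 3 (V3 (-1) 0 1) (M3 1 0 (-1) 0 1 (-1) (-1) (-1) 2) = 7/32"
    unfolding P_Undir_def Let_def invA by (simp add: qform_def)
  have b: "P_Undir 3 (V3 (-1) 0 1) (M3 1 0 (-1) 0 2 (-2) (-1) (-2) 3) = 38/169"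
    unfolding P_Undir_def Let_def invB by (simp add: qform_def)
  have c: "P_Undir 3 (V3 (-1) 0 1) (M3 1 0 (-1) 0 (3/2) (-3/2) (-1) (-3/2) (5/2)) = 2/9"
    unfolding P_Undir_def Let_def invC by (simp add: qform_def)
  show "P_Undir 3 (V3 (-1) 0 1) (1/2 \<cdot>\<^sub>m M3 1 0 (-1) 0 1 (-1) (-1) (-1) 2 + (1 - 1/2) \<cdot>\<^sub>m M3 1 0 (-1) 0 2 (-2) (-1) (-2) 3)
    > 1/2 * P_Undir 3 (V3 (-1) 0 1) (M3 1 0 (-1) 0 1 (-1) (-1) (-1) 2) + (1 - 1/2) * P_Undir 3 (V3 (-1) 0 1) (M3 1 0 (-1) 0 2 (-2) (-1) (-2) 3)"
    unfolding mid a b c by simp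
qed auto


theorem proposition1:
  shows "not_matrix_convex row_stochastic P_Dir \<and>
         not_matrix_convex row_stochastic D_Dir \<and>
         not_matrix_convex row_stochastic PD_Dir \<and>
         not_matrix_convex laplacian P_Undir \<and>
         not_matrix_convex laplacian D_Undir"
  using PDir DDir PDDir PUndir DUndir by blast

end
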